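(* For all closed terms $t_0,t_1$, if $t_0\approx_{\emptyset}t_1$ then $t_0\approx^p_{\emptyset}t_1$.
   Context: Terms of $\lambda_S$: $t ::= x \mid \lambda x.t \mid t\,t \mid \mathcal{S}k.t \mid \langle t\rangle$ (shift binds $k$; $\langle\cdot\rangle$ reset), up to $\alpha$-conversion. Values $v::=\lambda x.t$. Pure contexts $E ::= \Box \mid v\,E \mid E\,t$; evaluation contexts $F ::= \Box \mid v\,F \mid F\,t \mid \langle F\rangle$. Reduction: $F[(\lambda x.t)v]\to F[t\{v/x\}]$; $F[\langle E[\mathcal Sk.t]\rangle]\to F[\langle t\{\lambda x.\langle E[x]\rangle/k\}\rangle]$ ($x\notin\mathrm{fv}(E)$); $F[\langle v\rangle]\to F[v]$; $\to^*$ reflexive-transitive closure. Stuck: not a value and irreducible; normal form: value or stuck. Program: term $\langle t\rangle$ (ranged over by $p$). Closures: for $R$ a relation on closed terms, $\widetilde R$ is the smallest relation containing $R$, all $(x,x)$, closed under all term constructors, restricted to closed terms; $\widehat R$ is the smallest relation on closed evaluation contexts with $\Box\widehat R\Box$, $v_0F_0\widehat Rv_1F_1$ if $F_0\widehat RF_1,v_0\widetilde Rv_1$; $F_0t_0\widehat RF_1t_1$ if $F_0\widehat RF_1,t_0\widetilde Rt_1$; $\langle F_0\rangle\widehat R\langle F_1\rangle$ if $F_0\widehat RF_1$. An environmental relation $\mathcal X$ is a set of environments (relations on closed terms) and triples $(\mathcal E,t_0,t_1)$ with $t_0,t_1$ closed, written $t_0\mathcal X_{\mathcal E}t_1$. Relaxed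 bisimilarity $\approx$: environments relate closed values with values and closed stuck terms with stuck terms; $\mathcal X$ is an environmental bisimulation if (1) whenever $t_0\mathcal X_{\mathcal E}t_1$: (a) $t_0\to t_0'$ implies $t_1\to^*t_1'$, $t_0'\mathcal X_{\mathcal E}t_1'$; (b) $t_0=v_0$ implies $t_1\to^*v_1$, $\mathcal E\cup\{(v_0,v_1)\}\in\mathcal X$; (c) $t_0$ stuck implies $t_1\to^*t_1'$ stuck, $\mathcal E\cup\{(t_0,t_1')\}\in\mathcal X$; (d) symmetric conditions; (2) whenever $\mathcal E\in\mathcal X$: (a) $(\lambda x.t_0)\mathcal E(\lambda x.t_1)$, $v_0\widetilde{\mathcal E}v_1$ imply $t_0\{v_0/x\}\mathcal X_{\mathcal E}t_1\{v_1/x\}$; (b) $E_0[\mathcal Sk.t_0]\mathcal EE_1[\mathcal Sk.t_1]$, pure $E_0'\widehat{\mathcal E}E_1'$ imply $\langle t_0\{\lambda x.\langle E_0'[E_0[x]]\rangle/k\}\rangle\mathcal X_{\mathcal E}\langle t_1\{\lambda x.\langle E_1'[E_1[x]]\rangle/k\}\rangle$ ($x$ fresh). $\approx$ is the largest; $t_0\approx_\emptyset t_1$ means $(\emptyset,t_0,t_1)\in\approx$. Program bisimilarity $\approx^p$: environments relate closed values only; $\mathcal X$ is an environmental bisimulation for programs if (1) if $t_0\mathcal X_{\mathcal E}t_1$ and $t_0,t_1$ are not both programs then for all pure $E_0\widehat{\mathcal E}E_1$, $\langle E_0[t_0]\rangle\mathcal X_{\mathcal E}\langle E_1[t_1]\rangle$;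 (2) if $p_0\mathcal X_{\mathcal E}p_1$: (a) $p_0\to p_0'$ (program) implies $p_1\to^*p_1'$ (program), $p_0'\mathcal X_{\mathcal E}p_1'$; (b) $p_0\to v_0$ implies $p_1\to^*v_1$, $\{(v_0,v_1)\}\cup\mathcal E\in\mathcal X$; (c) symmetric conditions; (3) for $\mathcal E\in\mathcal X$, $(\lambda x.t_0)\mathcal E(\lambda x.t_1)$, $v_0\widetilde{\mathcal E}v_1$ imply $t_0\{v_0/x\}\mathcal X_{\mathcal E}t_1\{v_1/x\}$. $\approx^p$ is the largest; $t_0\approx^p_\emptyset t_1$ means $(\emptyset,t_0,t_1)\in\approx^p$. *)

theory Defs
  imports Main
begin

section \<open>Terms of lambda_S (de Bruijn indices, so terms are up to alpha-conversion)\<close>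

datatype tm = Var nat | Lam tm | App tm tm | Shift tm | Reset tm
  (* Shift t: the shift operator S k. t, with k bound as index 0 in t *)

fun closed_at :: "nat \<Rightarrow> tm \<Rightarrow> bool" where
  "closed_at n (Var m) = (m < n)"
| "closed_at n (Lam t) = closed_at (Suc n) t"
| "closed_at n (App t u) = (closed_at n t \<and> closed_at n u)"
| "closed_at n (Shift t) = closed_at (Suc n) t"
| "closed_at n (Reset t) = closed_at n t"

definition closed :: "tm \<Rightarrow> bool" where
  "closed t = closed_at 0 t"

fun lift :: "nat \<Rightarrow> tm \<Rightarrow> tm" where
  "lift k (Var n) = (if n < k then Var n else Var (Suc n))"
| "lift k (Lam t) = Lam (lift (Suc k) t)"
| "lift k (App t u) = App (lift k t) (lift k u)"
| "lift k (Shift t) = Shift (lift (Suc k) t)"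
| "lift k (Reset t) = Reset (lift k t)"

fun subst :: "nat \<Rightarrow> tm \<Rightarrow> tm \<Rightarrow> tm" where
  "subst k s (Var n) = (if n = k then s else if k < n then Var (n - 1) else Var n)"
| "subst k s (Lam t) = Lam (subst (Suc k) (lift 0 s) t)"
| "subst k s (App t u) = App (subst k s t) (subst k s u)"
| "subst k s (Shift t) = Shift (subst (Suc k) (lift 0 s) t)"
| "subst k s (Reset t) = Reset (subst k s t)"

text \<open>t{s/x} where x is the binder (index 0) of the body t\<close>
definition subst0 :: "tm \<Rightarrow> tm \<Rightarrow> tm" where
  "subst0 t s = subst 0 s t"

fun is_val :: "tm \<Rightarrow> bool" where
  "is_val (Lam _) = True"
| "is_val _ = False"

definition is_prog :: "tm \<Rightarrow> bool" where
  "is_prog t = (\<exists>u. t = Reset u)"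

datatype ctx = Hole | CArg tm ctx | CFun ctx tm | CRst ctx
  (* CArg v C = v C ; CFun C t = C t ; CRst C = <C> *)

fun plug :: "ctx \<Rightarrow> tm \<Rightarrow> tm" where
  "plug Hole t = t"
| "plug (CArg v C) t = App v (plug C t)"
| "plug (CFun C u) t = App (plug C t) u"
| "plug (CRst C) t = Reset (plug C t)"

fun liftC :: "nat \<Rightarrow> ctx \<Rightarrow> ctx" where
  "liftC k Hole = Hole"
| "liftC k (CArg v C) = CArg (lift k v) (liftC k C)"
| "liftC k (CFun C u) = CFun (liftC k C) (lift k u)"
| "liftC k (CRst C) = CRst (liftC k C)"

fun evctx :: "ctx \<Rightarrow> bool" where
  "evctx Hole = True"
| "evctx (CArg v C) = (is_val v \<and> evctx C)"
| "evctx (CFun C u) = evctx C"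
| "evctx (CRst C) = evctx C"

fun pure :: "ctx \<Rightarrow> bool" where
  "pure Hole = True"
| "pure (CArg v C) = (is_val v \<and> pure C)"
| "pure (CFun C u) = pure C"
| "pure (CRst C) = False"

text \<open>the captured continuation  lambda x. < D[C[x]] > \<close>
definition kont :: "ctx \<Rightarrow> ctx \<Rightarrow> tm" where
  "kont D C = Lam (Reset (plug (liftC 0 D) (plug (liftC 0 C) (Var 0))))"

inductive step :: "tm \<Rightarrow> tm \<Rightarrow> bool" where
  beta: "\<lbrakk>evctx F; is_val v\<rbrakk> \<Longrightarrow> step (plug F (App (Lam t) v)) (plug F (subst0 t v))"
| shift: "\<lbrakk>evctx F; pure E\<rbrakk> \<Longrightarrow>
     step (plug F (Reset (plug E (Shift t)))) (plug F (Reset (subst0 t (kont Hole E))))"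
| reset: "\<lbrakk>evctx F; is_val v\<rbrakk> \<Longrightarrow> step (plug F (Reset v)) (plug F v)"

abbreviation steps :: "tm \<Rightarrow> tm \<Rightarrow> bool" where
  "steps \<equiv> step\<^sup>*\<^sup>*"

definition stuck :: "tm \<Rightarrow> bool" where
  "stuck t = (\<not> is_val t \<and> (\<nexists>u. step t u))"

type_synonym env = "(tm \<times> tm) set"

inductive tilde0 :: "env \<Rightarrow> tm \<Rightarrow> tm \<Rightarrow> bool" for R where
  base: "(t0, t1) \<in> R \<Longrightarrow> tilde0 R t0 t1"
| var: "tilde0 R (Var n) (Var n)"
| lam: "tilde0 R t0 t1 \<Longrightarrow> tilde0 R (Lam t0) (Lam t1)"
| app: "\<lbrakk>tilde0 R t0 t1; tilde0 R u0 u1\<rbrakk> \<Longrightarrow> tilde0 R (App t0 u0) (App t1 u1)"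
| shf: "tilde0 R t0 t1 \<Longrightarrow> tilde0 R (Shift t0) (Shift t1)"
| rst: "tilde0 R t0 t1 \<Longrightarrow> tilde0 R (Reset t0) (Reset t1)"

definition tilde :: "env \<Rightarrow> tm \<Rightarrow> tm \<Rightarrow> bool" where
  "tilde R t0 t1 = (tilde0 R t0 t1 \<and> closed t0 \<and> closed t1)"

inductive hat :: "env \<Rightarrow> ctx \<Rightarrow> ctx \<Rightarrow> bool" for R where
  hole: "hat R Hole Hole"
| arg: "\<lbrakk>hat R F0 F1; tilde R v0 v1; is_val v0; is_val v1\<rbrakk> \<Longrightarrow> hat R (CArg v0 F0) (CArg v1 F1)"
| fn: "\<lbrakk>hat R F0 F1; tilde R t0 t1\<rbrakk> \<Longrightarrow> hat R (CFun F0 t0) (CFun F1 t1)"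
| rs: "hat R F0 F1 \<Longrightarrow> hat R (CRst F0) (CRst F1)"

type_synonym envrel = "env set \<times> (env \<times> tm \<times> tm) set"

definition relaxed_env :: "env \<Rightarrow> bool" where
  "relaxed_env E = (\<forall>(a, b) \<in> E. closed a \<and> closed b \<and>
      ((is_val a \<and> is_val b) \<or> (stuck a \<and> stuck b)))"

definition relaxed_bisim :: "envrel \<Rightarrow> bool" where
  "relaxed_bisim X =
   ((\<forall>E \<in> fst X. relaxed_env E) \<and>
    (\<forall>(E, t0, t1) \<in> snd X. relaxed_env E \<and> closed t0 \<and> closed t1) \<and>
    (\<forall>E t0 t1. (E, t0, t1) \<in> snd X \<longrightarrow>
       (\<forall>t0'. step t0 t0' \<longrightarrow> (\<exists>t1'. steps t1 t1' \<and> (E, t0', t1') \<in> snd X)) \<and>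
       (is_val t0 \<longrightarrow> (\<exists>v1. steps t1 v1 \<and> is_val v1 \<and> E \<union> {(t0, v1)} \<in> fst X)) \<and>
       (stuck t0 \<longrightarrow> (\<exists>t1'. steps t1 t1' \<and> stuck t1' \<and> E \<union> {(t0, t1')} \<in> fst X)) \<and>
       (\<forall>t1'. step t1 t1' \<longrightarrow> (\<exists>t0'. steps t0 t0' \<and> (E, t0', t1') \<in> snd X)) \<and>
       (is_val t1 \<longrightarrow> (\<exists>v0. steps t0 v0 \<and> is_val v0 \<and> E \<union> {(v0, t1)} \<in> fst X)) \<and>
       (stuck t1 \<longrightarrow> (\<exists>t0'. steps t0 t0' \<and> stuck t0' \<and> E \<union> {(t0', t1)} \<in> fst X))) \<and>
    (\<forall>E \<in> fst X.
       (\<forall>s0 s1 v0 v1. (Lam s0, Lam s1) \<in> E \<and> is_val v0 \<and> is_val v1 \<and> tilde E v0 v1 \<longrightarrow>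
          (E, subst0 s0 v0, subst0 s1 v1) \<in> snd X) \<and>
       (\<forall>C0 s0 C1 s1 D0 D1. pure C0 \<and> pure C1 \<and> (plug C0 (Shift s0), plug C1 (Shift s1)) \<in> E \<and>
          pure D0 \<and> pure D1 \<and> hat E D0 D1 \<longrightarrow>
          (E, Reset (subst0 s0 (kont D0 C0)), Reset (subst0 s1 (kont D1 C1))) \<in> snd X)))"

definition rbisim :: envrel where
  "rbisim = (\<Union>{fst X | X. relaxed_bisim X}, \<Union>{snd X | X. relaxed_bisim X})"

definition prog_env :: "env \<Rightarrow> bool" where
  "prog_env E = (\<forall>(a, b) \<in> E. closed a \<and> closed b \<and> is_val a \<and> is_val b)"

definition prog_bisim :: "envrel \<Rightarrow> bool" where
  "prog_bisim X =
   ((\<forall>E \<in> fst X. prog_env E) \<and>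
    (\<forall>(E, t0, t1) \<in> snd X. prog_env E \<and> closed t0 \<and> closed t1) \<and>
    (\<forall>E t0 t1. (E, t0, t1) \<in> snd X \<and> \<not> (is_prog t0 \<and> is_prog t1) \<longrightarrow>
       (\<forall>D0 D1. pure D0 \<and> pure D1 \<and> hat E D0 D1 \<longrightarrow>
          (E, Reset (plug D0 t0), Reset (plug D1 t1)) \<in> snd X)) \<and>
    (\<forall>E p0 p1. (E, p0, p1) \<in> snd X \<and> is_prog p0 \<and> is_prog p1 \<longrightarrow>
       (\<forall>p0'. step p0 p0' \<and> is_prog p0' \<longrightarrow>
          (\<exists>p1'. steps p1 p1' \<and> is_prog p1' \<and> (E, p0', p1') \<in> snd X)) \<and>
       (\<forall>v0. step p0 v0 \<and> is_val v0 \<longrightarrow>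
          (\<exists>v1. steps p1 v1 \<and> is_val v1 \<and> {(v0, v1)} \<union> E \<in> fst X)) \<and>
       (\<forall>p1'. step p1 p1' \<and> is_prog p1' \<longrightarrow>
          (\<exists>p0'. steps p0 p0' \<and> is_prog p0' \<and> (E, p0', p1') \<in> snd X)) \<and>
       (\<forall>v1. step p1 v1 \<and> is_val v1 \<longrightarrow>
          (\<exists>v0. steps p0 v0 \<and> is_val v0 \<and> {(v0, v1)} \<union> E \<in> fst X))) \<and>
    (\<forall>E \<in> fst X. \<forall>s0 s1 v0 v1. (Lam s0, Lam s1) \<in> E \<and> is_val v0 \<and> is_val v1 \<and> tilde E v0 v1 \<longrightarrow>
          (E, subst0 s0 v0, subst0 s1 v1) \<in> snd X))"

definition pbisim :: envrel where
  "pbisim = (\<Union>{fst X | X. prog_bisim X}, \<Union>{snd X | X. prog_bisim X})"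

end

theory Submission
  imports Defs
begin



lemma closed_at_mono: "closed_at n t \<Longrightarrow> n \<le> m \<Longrightarrow> closed_at m t"
  by (induction t arbitrary: n m) auto

lemma lift_closed: "closed_at n t \<Longrightarrow> n \<le> k \<Longrightarrow> lift k t = t"
  by (induction t arbitrary: n k) auto

lemma lift_closed0[simp]: "closed t \<Longrightarrow> lift k t = t"
  using lift_closed closed_def by blast

lemma subst_closed: "closed_at n t \<Longrightarrow> n \<le> k \<Longrightarrow> subst k s t = t"
  by (induction t arbitrary: n k s) auto

lemma closed_subst: "closed_at (Suc n) t \<Longrightarrow> closed s \<Longrightarrow> k \<le> n \<Longrightarrow> closed_at n (subst k s t)"
proof (induction t arbitrary: n k)
  case (Var m)
  then show ?case using closed_at_mono[of 0 s n] by (auto simp: closed_def)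
qed (auto simp: closed_def)

fun closedC :: "nat \<Rightarrow> ctx \<Rightarrow> bool" where
  "closedC n Hole = True"
| "closedC n (CArg v C) = (closed_at n v \<and> closedC n C)"
| "closedC n (CFun C u) = (closedC n C \<and> closed_at n u)"
| "closedC n (CRst C) = closedC n C"

lemma closed_plug[simp]: "closed_at n (plug F t) = (closedC n F \<and> closed_at n t)"
  by (induction F) auto

lemma closedC_mono: "closedC n C \<Longrightarrow> n \<le> m \<Longrightarrow> closedC m C"
  by (induction C) (auto intro: closed_at_mono)

lemma liftC_closed: "closedC n C \<Longrightarrow> n \<le> k \<Longrightarrow> liftC k C = C"
  by (induction C) (auto intro: lift_closed)

fun ccomp :: "ctx \<Rightarrow> ctx \<Rightarrow> ctx" where
  "ccomp Hole G = G"
| "ccomp (CArg v F) G = CArg v (ccomp F G)"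
| "ccomp (CFun F u) G = CFun (ccomp F G) u"
| "ccomp (CRst F) G = CRst (ccomp F G)"

lemma plug_comp[simp]: "plug (ccomp F G) t = plug F (plug G t)"
  by (induction F) auto
lemma evctx_comp[simp]: "evctx (ccomp F G) = (evctx F \<and> evctx G)"
  by (induction F) auto
lemma pure_comp[simp]: "pure (ccomp F G) = (pure F \<and> pure G)"
  by (induction F) auto
lemma liftC_comp[simp]: "liftC k (ccomp F G) = ccomp (liftC k F) (liftC k G)"
  by (induction F) auto
lemma closedC_comp[simp]: "closedC n (ccomp F G) = (closedC n F \<and> closedC n G)"
  by (induction F) auto

lemma kont_comp: "kont Hole (ccomp G1 G2) = kont G1 G2"
  by (simp add: kont_def)

lemma kont_closed: "closedC 0 G \<Longrightarrow> kont Hole G = Lam (Reset (plug G (Var 0)))"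
  by (simp add: kont_def liftC_closed)

lemma closed_kont: "closedC 0 G \<Longrightarrow> closed (kont Hole G)"
  using closedC_mono[of 0 G 1] by (simp add: kont_closed closed_def)

inductive contr :: "tm \<Rightarrow> tm \<Rightarrow> bool" where
  "is_val v \<Longrightarrow> contr (App (Lam t) v) (subst0 t v)"
| "pure E \<Longrightarrow> contr (Reset (plug E (Shift t))) (Reset (subst0 t (kont Hole E)))"
| "is_val v \<Longrightarrow> contr (Reset v) v"

lemma step_iff: "step t t' = (\<exists>F r c. evctx F \<and> contr r c \<and> t = plug F r \<and> t' = plug F c)"
proof
  assume "step t t'" then show "\<exists>F r c. evctx F \<and> contr r c \<and> t = plug F r \<and> t' = plug F c"
    by (induction rule: step.induct) (blast intro: contr.intros)+
next
  assume "\<exists>F r c. evctx F \<and> contr r c \<and> t = plug F r \<and> t' = plug F c"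
  then show "step t t'" by (auto elim!: contr.cases intro: step.intros)
qed

lemma step_ctx: "step t t' \<Longrightarrow> evctx F \<Longrightarrow> step (plug F t) (plug F t')"
  unfolding step_iff by (metis evctx_comp plug_comp)

lemma steps_ctx: "steps t t' \<Longrightarrow> evctx F \<Longrightarrow> steps (plug F t) (plug F t')"
  by (induction rule: rtranclp_induct) (auto intro: rtranclp.rtrancl_into_rtrancl step_ctx)

lemma plug_Lam: "plug G r = Lam t \<Longrightarrow> G = Hole \<and> r = Lam t"
  by (cases G) auto

lemma is_val_plug: "is_val (plug G r) \<Longrightarrow> G = Hole \<and> is_val r"
  by (cases G) auto

lemma contr_not_val: "contr r c \<Longrightarrow> \<not> is_val r"
  by (auto simp: contr.simps)

lemma val_no_step: "is_val t \<Longrightarrow> \<not> step t t'"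
  by (auto simp: step_iff dest!: is_val_plug contr_not_val)

lemma plug_shift_not_val: "\<not> is_val (plug E (Shift t))"
  by (auto dest!: is_val_plug)

lemma no_redex_in_stuck: "pure E \<Longrightarrow> evctx G \<Longrightarrow> contr r c \<Longrightarrow> plug G r \<noteq> plug E (Shift t)"
proof (induction E arbitrary: G)
  case Hole
  then show ?case by (cases G) (auto simp: contr.simps)
next
  case (CArg v E)
  then show ?case
    by (cases G) (auto simp: contr.simps plug_shift_not_val dest: is_val_plug)
next
  case (CFun E u)
  then show ?case
    by (cases G) (auto simp: contr.simps plug_shift_not_val dest: is_val_plug contr_not_val plug_Lam)
next
  case (CRst E)
  then show ?case by simp
qed

lemma step_closed: "step t t' \<Longrightarrow> closed t \<Longrightarrow> closed t'"
proof (induction rule: step.induct)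
  case (beta F v t)
  then show ?case by (auto simp: closed_def subst0_def intro!: closed_subst)
next
  case (shift F E t)
  then have "closed (kont Hole E)" using closed_kont[of E] by (simp add: closed_def)
  with shift show ?case by (auto simp: closed_def subst0_def intro!: closed_subst)
next
  case (reset F v)
  then show ?case by (auto simp: closed_def)
qed

lemma steps_closed: "steps t t' \<Longrightarrow> closed t \<Longrightarrow> closed t'"
  by (induction rule: rtranclp_induct) (auto dest: step_closed)



lemma redex_inner: "contr r c \<Longrightarrow> evctx G \<Longrightarrow> contr r' c' \<Longrightarrow> r = plug G r' \<Longrightarrow> G = Hole"
proof (cases G)
  case (CArg w G2)
  assume "contr r c" "evctx G" "contr r' c'" "r = plug G r'"
  then show ?thesis using CArg by (auto simp: contr.simps dest!: is_val_plug contr_not_val)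
next
  case (CFun G2 u)
  assume "contr r c" "evctx G" "contr r' c'" "r = plug G r'"
  then show ?thesis using CFun by (auto simp: contr.simps dest!: plug_Lam contr_not_val)
next
  case (CRst G2)
  assume a: "contr r c" "evctx G" "contr r' c'" "r = plug G r'"
  then show ?thesis using CRst no_redex_in_stuck[of _ G2 r' c']
    by (auto simp: contr.simps dest!: is_val_plug contr_not_val)
qed simp

lemma unique_decomp: "evctx F \<Longrightarrow> evctx F' \<Longrightarrow> contr r c \<Longrightarrow> contr r' c' \<Longrightarrow>
   plug F r = plug F' r' \<Longrightarrow> F = F' \<and> r = r'"
proof (induction F arbitrary: F')
  case Hole
  then have "F' = Hole" using redex_inner[of r c F' r' c'] by simp
  with Hole show ?case by simp
next
  case (CArg v F)
  note IH = CArg.IH and P = CArg.prems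
  show ?case
  proof (cases F')
    case Hole
    have "r' = plug (CArg v F) r" by (metis P(5) Hole plug.simps(1))
    from redex_inner[OF P(4) P(1) P(3) this] show ?thesis by simp
  next
    case (CArg w G)
    with P have "plug F r = plug G r'" "v = w" "evctx F" "evctx G" by simp_all
    with IH[of G] P(3,4) CArg show ?thesis by simp
  next
    case (CFun G u)
    with P have "plug G r' = v" "is_val v" by simp_all
    then have "is_val r'" using is_val_plug by metis
    with P show ?thesis using contr_not_val by blast
  next
    case (CRst G)
    then show ?thesis using P(5) by simp
  qed
next
  case (CFun F u)
  note IH = CFun.IH and P = CFun.prems
  show ?case
  proof (cases F')
    case Hole
    have "r' = plug (CFun F u) r" by (metis P(5) Hole plug.simps(1))
    from redex_inner[OF P(4) P(1) P(3) this] show ?thesis by simp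
  next
    case (CArg w G)
    with P have "plug F r = w" "is_val w" by simp_all
    then have "is_val r" using is_val_plug by metis
    with P show ?thesis using contr_not_val by blast
  next
    case (CFun G u')
    with P have "plug F r = plug G r'" "u = u'" "evctx F" "evctx G" by simp_all
    with IH[of G] P(3,4) CFun show ?thesis by simp
  next
    case (CRst G)
    then show ?thesis using P(5) by simp
  qed
next
  case (CRst F)
  note IH = CRst.IH and P = CRst.prems
  show ?case
  proof (cases F')
    case Hole
    have "r' = plug (CRst F) r" by (metis P(5) Hole plug.simps(1))
    from redex_inner[OF P(4) P(1) P(3) this] show ?thesis by simp
  next
    case (CRst G)
    with P have "plug F r = plug G r'" "evctx F" "evctx G" by simp_all
    with IH[of G] P(3,4) CRst show ?thesis by simp
  next
    case (CArg w G)
    then show ?thesis using P(5) by simp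
  next
    case (CFun G u)
    then show ?thesis using P(5) by simp
  qed
qed

lemma plug_shift_inj: "pure E \<Longrightarrow> pure E' \<Longrightarrow> plug E (Shift t) = plug E' (Shift t') \<Longrightarrow> E = E' \<and> t = t'"
proof (induction E arbitrary: E')
  case Hole then show ?case by (cases E') auto
next
  case (CArg v E) then show ?case by (cases E') (auto simp: plug_shift_not_val dest!: is_val_plug)
next
  case (CFun E u) then show ?case by (cases E') (auto simp: plug_shift_not_val dest!: is_val_plug)
next
  case (CRst E) then show ?case by simp
qed



lemma contr_det: "contr r c \<Longrightarrow> contr r c' \<Longrightarrow> c = c'"
proof (induction rule: contr.induct)
  case (1 v t)
  from 1(2) show ?case by (cases rule: contr.cases) auto
next
  case (2 E t)
  from 2(2) show ?case
  proof (cases rule: contr.cases)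
    case (2 E' t')
    with plug_shift_inj[of E E' t t'] \<open>pure E\<close> show ?thesis by simp
  next
    case 3
    then show ?thesis using plug_shift_not_val by simp
  qed
next
  case (3 v)
  from 3(2) show ?case
  proof (cases rule: contr.cases)
    case (2 E' t')
    then show ?thesis using 3(1) plug_shift_not_val by simp
  qed simp_all
qed

lemma step_det: "step t t1 \<Longrightarrow> step t t2 \<Longrightarrow> t1 = t2"
proof -
  assume "step t t1" "step t t2"
  then obtain F r c F' r' c' where a: "evctx F" "contr r c" "t = plug F r" "t1 = plug F c"
    "evctx F'" "contr r' c'" "t = plug F' r'" "t2 = plug F' c'" unfolding step_iff by blast
  then have "F = F' \<and> r = r'" using unique_decomp[of F F' r c r' c'] by simp
  with a contr_det show ?thesis by blast
qed



lemma stuck_form_aux: "closed_at 0 t \<Longrightarrow> \<not> is_val t \<Longrightarrow> \<not> (\<exists>u. step t u) \<Longrightarrow> \<exists>C s. pure C \<and> t = plug C (Shift s)"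
proof (induction t)
  case (Var x) then show ?case by simp
next
  case (Lam t) then show ?case by simp
next
  case (App t1 t2)
  show ?case
  proof (cases "\<exists>u. step t1 u")
    case True
    then obtain u where "step t1 u" by blast
    from step_ctx[OF this, of "CFun Hole t2"] App.prems show ?thesis by auto
  next
    case f1: False
    show ?thesis
    proof (cases "is_val t1")
      case True
      show ?thesis
      proof (cases "\<exists>u. step t2 u")
        case True
        then obtain u where "step t2 u" by blast
        from step_ctx[OF this, of "CArg t1 Hole"] App.prems \<open>is_val t1\<close> show ?thesis by auto
      next
        case False
        show ?thesis
        proof (cases "is_val t2")
          case True
          from \<open>is_val t1\<close> obtain b where "t1 = Lam b" by (cases t1) auto
          with True step.beta[of Hole t2 b] App.prems show ?thesis by auto
        next
          case False
          with \<open>\<not> (\<exists>u. step t2 u)\<close> App obtain C s where "pure C" "t2 = plug C (Shift s)" by auto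
          with \<open>is_val t1\<close> show ?thesis by (intro exI[of _ "CArg t1 C"]) auto
        qed
      qed
    next
      case False
      with f1 App obtain C s where "pure C" "t1 = plug C (Shift s)" by auto
      then show ?thesis by (intro exI[of _ "CFun C t2"]) auto
    qed
  qed
next
  case (Shift t) then show ?case by (intro exI[of _ Hole]) auto
next
  case (Reset t)
  show ?case
  proof (cases "\<exists>u. step t u")
    case True
    then obtain u where "step t u" by blast
    from step_ctx[OF this, of "CRst Hole"] Reset.prems show ?thesis by auto
  next
    case False
    show ?thesis
    proof (cases "is_val t")
      case True
      with step.reset[of Hole t] Reset.prems show ?thesis by auto
    next
      case False
      with \<open>\<not> (\<exists>u. step t u)\<close> Reset obtain C s where "pure C" "t = plug C (Shift s)" by auto
      with step.shift[of Hole C s] Reset.prems show ?thesis by auto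
    qed
  qed
qed

lemma stuck_form: "closed t \<Longrightarrow> stuck t \<Longrightarrow> \<exists>C s. pure C \<and> t = plug C (Shift s)"
  using stuck_form_aux by (auto simp: closed_def stuck_def)




definition sw :: "env \<Rightarrow> env" where "sw E = {(b, a). (a, b) \<in> E}"

lemma sw_mem[simp]: "(a, b) \<in> sw E \<longleftrightarrow> (b, a) \<in> E" by (simp add: sw_def)
lemma sw_sw[simp]: "sw (sw E) = E" by (auto simp: sw_def)
lemma sw_Un[simp]: "sw (E \<union> E') = sw E \<union> sw E'" by (auto simp: sw_def)
lemma sw_ins[simp]: "sw (insert (a, b) E) = insert (b, a) (sw E)" by (auto simp: sw_def)
lemma sw_empty[simp]: "sw {} = {}" by (auto simp: sw_def)
lemma sw_mono: "E \<subseteq> E' \<Longrightarrow> sw E \<subseteq> sw E'" by (auto simp: sw_def)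
lemma sw_subset_iff[simp]: "sw E \<subseteq> E' \<longleftrightarrow> E \<subseteq> sw E'" by (auto simp: sw_def)

lemma tilde0_sw: "tilde0 E a b \<Longrightarrow> tilde0 (sw E) b a"
  by (induction rule: tilde0.induct) (auto intro: tilde0.intros)

lemma tilde0_sw_iff: "tilde0 (sw E) b a = tilde0 E a b"
  using tilde0_sw[of E a b] tilde0_sw[of "sw E" b a] by auto

lemma tilde_sw: "tilde (sw E) b a = tilde E a b"
  by (auto simp: tilde_def tilde0_sw_iff)

lemma tilde0_mono: "tilde0 E a b \<Longrightarrow> E \<subseteq> E' \<Longrightarrow> tilde0 E' a b"
  by (induction rule: tilde0.induct) (auto intro: tilde0.intros)

lemma tilde_mono: "tilde E a b \<Longrightarrow> E \<subseteq> E' \<Longrightarrow> tilde E' a b"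
  by (auto simp: tilde_def intro: tilde0_mono)

lemma tilde0_trans_env: "tilde0 R x y \<Longrightarrow> (\<forall>(a, b) \<in> R. tilde0 E a b) \<Longrightarrow> tilde0 E x y"
  by (induction rule: tilde0.induct) (auto intro: tilde0.intros)

definition envclosed :: "env \<Rightarrow> bool" where
  "envclosed E = (\<forall>(a, b) \<in> E. closed a \<and> closed b)"

lemma relaxed_envclosed: "relaxed_env E \<Longrightarrow> envclosed E"
  by (auto simp: relaxed_env_def envclosed_def)

lemma tilde0_lift: "tilde0 E a b \<Longrightarrow> envclosed E \<Longrightarrow> tilde0 E (lift k a) (lift k b)"
proof (induction arbitrary: k rule: tilde0.induct)
  case (base t0 t1)
  then have "closed t0" "closed t1" by (auto simp: envclosed_def)
  with base show ?case by (auto intro: tilde0.base)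
qed (auto intro: tilde0.intros)

lemma tilde0_subst: "tilde0 E t t' \<Longrightarrow> envclosed E \<Longrightarrow> tilde0 E s s' \<Longrightarrow> closed s \<Longrightarrow> closed s' \<Longrightarrow>
  tilde0 E (subst k s t) (subst k s' t')"
proof (induction arbitrary: k rule: tilde0.induct)
  case (base t0 t1)
  then have "closed t0" "closed t1" by (auto simp: envclosed_def)
  then have "subst k s t0 = t0" "subst k s' t1 = t1"
    by (auto simp: closed_def intro: subst_closed)
  with base show ?case by (auto intro: tilde0.base)
qed (auto intro: tilde0.intros)

lemma tilde0_subst0: "envclosed E \<Longrightarrow> tilde0 E t t' \<Longrightarrow> tilde0 E s s' \<Longrightarrow> closed s \<Longrightarrow> closed s' \<Longrightarrow>
  tilde0 E (subst0 t s) (subst0 t' s')"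
  unfolding subst0_def using tilde0_subst by blast

lemma tilde0_val: "tilde0 E v y \<Longrightarrow> relaxed_env E \<Longrightarrow> is_val v \<Longrightarrow> is_val y"
  by (induction rule: tilde0.induct) (auto simp: relaxed_env_def stuck_def)

inductive ctxrel :: "env \<Rightarrow> ctx \<Rightarrow> ctx \<Rightarrow> bool" for R where
  "ctxrel R Hole Hole"
| "tilde0 R v0 v1 \<Longrightarrow> ctxrel R F0 F1 \<Longrightarrow> ctxrel R (CArg v0 F0) (CArg v1 F1)"
| "ctxrel R F0 F1 \<Longrightarrow> tilde0 R t0 t1 \<Longrightarrow> ctxrel R (CFun F0 t0) (CFun F1 t1)"
| "ctxrel R F0 F1 \<Longrightarrow> ctxrel R (CRst F0) (CRst F1)"

lemma ctxrel_plug: "ctxrel R F0 F1 \<Longrightarrow> tilde0 R t0 t1 \<Longrightarrow> tilde0 R (plug F0 t0) (plug F1 t1)"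
  by (induction rule: ctxrel.induct) (auto intro: tilde0.intros)

lemma ctxrel_comp: "ctxrel R F0 F1 \<Longrightarrow> ctxrel R G0 G1 \<Longrightarrow> ctxrel R (ccomp F0 G0) (ccomp F1 G1)"
  by (induction rule: ctxrel.induct) (auto intro: ctxrel.intros)

lemma ctxrel_mono: "ctxrel R F0 F1 \<Longrightarrow> R \<subseteq> R' \<Longrightarrow> ctxrel R' F0 F1"
  by (induction rule: ctxrel.induct) (auto intro: ctxrel.intros tilde0_mono)

lemma ctxrel_trans_env: "ctxrel R F0 F1 \<Longrightarrow> (\<forall>(a, b) \<in> R. tilde0 E a b) \<Longrightarrow> ctxrel E F0 F1"
  by (induction rule: ctxrel.induct) (auto intro: ctxrel.intros tilde0_trans_env)

lemma ctxrel_sw: "ctxrel R F0 F1 \<Longrightarrow> ctxrel (sw R) F1 F0"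
  by (induction rule: ctxrel.induct) (auto intro: ctxrel.intros tilde0_sw)

lemma ctxrel_sw_iff: "ctxrel (sw R) F1 F0 = ctxrel R F0 F1"
  using ctxrel_sw[of R F0 F1] ctxrel_sw[of "sw R" F1 F0] by auto

lemma ctxrel_evctx: "ctxrel R F0 F1 \<Longrightarrow> relaxed_env R \<Longrightarrow> evctx F0 \<Longrightarrow> evctx F1"
  by (induction rule: ctxrel.induct) (auto dest: tilde0_val)

lemma ctxrel_pure: "ctxrel R F0 F1 \<Longrightarrow> relaxed_env R \<Longrightarrow> pure F0 \<Longrightarrow> pure F1"
  by (induction rule: ctxrel.induct) (auto dest: tilde0_val)

lemma ctxrel_Hole: "ctxrel R Hole F \<Longrightarrow> F = Hole"
  by (erule ctxrel.cases) auto

lemma hat_ctxrel: "hat R D0 D1 \<Longrightarrow> ctxrel R D0 D1 \<and> evctx D0 \<and> evctx D1 \<and> closedC 0 D0 \<and> closedC 0 D1"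
  by (induction rule: hat.induct) (auto simp: tilde_def closed_def intro: ctxrel.intros)

lemma ctxrel_hat: "ctxrel R F0 F1 \<Longrightarrow> evctx F0 \<Longrightarrow> evctx F1 \<Longrightarrow> closedC 0 F0 \<Longrightarrow> closedC 0 F1 \<Longrightarrow> hat R F0 F1"
  by (induction rule: ctxrel.induct) (auto simp: tilde_def closed_def intro: hat.intros)

lemma tilde0_App_inv: "tilde0 E (App a b) x \<Longrightarrow> (App a b, x) \<in> E \<or> (\<exists>x1 x2. x = App x1 x2 \<and> tilde0 E a x1 \<and> tilde0 E b x2)"
  by (erule tilde0.cases) auto
lemma tilde0_Reset_inv: "tilde0 E (Reset a) x \<Longrightarrow> (Reset a, x) \<in> E \<or> (\<exists>x1. x = Reset x1 \<and> tilde0 E a x1)"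
  by (erule tilde0.cases) auto
lemma tilde0_Lam_inv: "tilde0 E (Lam a) x \<Longrightarrow> (Lam a, x) \<in> E \<or> (\<exists>x1. x = Lam x1 \<and> tilde0 E a x1)"
  by (erule tilde0.cases) auto
lemma tilde0_Shift_inv: "tilde0 E (Shift a) x \<Longrightarrow> (Shift a, x) \<in> E \<or> (\<exists>x1. x = Shift x1 \<and> tilde0 E a x1)"
  by (erule tilde0.cases) auto

lemma decomp: "tilde0 E (plug G r) x \<Longrightarrow>
  (\<exists>G' r'. x = plug G' r' \<and> ctxrel E G G' \<and> tilde0 E r r') \<or>
  (\<exists>G1 G2 G1' l. G = ccomp G1 G2 \<and> x = plug G1' l \<and> ctxrel E G1 G1' \<and> (plug G2 r, l) \<in> E)"
proof (induction G arbitrary: x)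
  case Hole
  then show ?case by (metis ctxrel.intros(1) plug.simps(1))
next
  case (CArg v G)
  from tilde0_App_inv[OF CArg.prems[simplified]] show ?case
  proof
    assume "(App v (plug G r), x) \<in> E"
    then show ?thesis by (intro disjI2 exI[of _ Hole] exI[of _ "CArg v G"] exI[of _ Hole] exI[of _ x]) (auto intro: ctxrel.intros)
  next
    assume "\<exists>t1 u1. x = App t1 u1 \<and> tilde0 E v t1 \<and> tilde0 E (plug G r) u1"
    then obtain t1 u1 where app: "x = App t1 u1" "tilde0 E v t1" "tilde0 E (plug G r) u1" by blast
    from CArg.IH[OF app(3)] show ?thesis
    proof
      assume "\<exists>G' r'. u1 = plug G' r' \<and> ctxrel E G G' \<and> tilde0 E r r'"
      then obtain G' r' where "u1 = plug G' r'" "ctxrel E G G'" "tilde0 E r r'" by blast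
      with app show ?thesis by (intro disjI1 exI[of _ "CArg t1 G'"] exI[of _ r']) (auto intro: ctxrel.intros)
    next
      assume "\<exists>G1 G2 G1' l. G = ccomp G1 G2 \<and> u1 = plug G1' l \<and> ctxrel E G1 G1' \<and> (plug G2 r, l) \<in> E"
      then obtain G1 G2 G1' l where "G = ccomp G1 G2" "u1 = plug G1' l" "ctxrel E G1 G1'" "(plug G2 r, l) \<in> E" by blast
      with app show ?thesis by (intro disjI2 exI[of _ "CArg v G1"] exI[of _ G2] exI[of _ "CArg t1 G1'"] exI[of _ l]) (auto intro: ctxrel.intros)
    qed
  qed
next
  case (CFun G u)
  from tilde0_App_inv[OF CFun.prems[simplified]] show ?case
  proof
    assume "(App (plug G r) u, x) \<in> E"
    then show ?thesis by (intro disjI2 exI[of _ Hole] exI[of _ "CFun G u"] exI[of _ Hole] exI[of _ x]) (auto intro: ctxrel.intros)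
  next
    assume "\<exists>t1 u1. x = App t1 u1 \<and> tilde0 E (plug G r) t1 \<and> tilde0 E u u1"
    then obtain t1 u1 where app: "x = App t1 u1" "tilde0 E (plug G r) t1" "tilde0 E u u1" by blast
    from CFun.IH[OF app(2)] show ?thesis
    proof
      assume "\<exists>G' r'. t1 = plug G' r' \<and> ctxrel E G G' \<and> tilde0 E r r'"
      then obtain G' r' where "t1 = plug G' r'" "ctxrel E G G'" "tilde0 E r r'" by blast
      with app show ?thesis by (intro disjI1 exI[of _ "CFun G' u1"] exI[of _ r']) (auto intro: ctxrel.intros)
    next
      assume "\<exists>G1 G2 G1' l. G = ccomp G1 G2 \<and> t1 = plug G1' l \<and> ctxrel E G1 G1' \<and> (plug G2 r, l) \<in> E"
      then obtain G1 G2 G1' l where "G = ccomp G1 G2" "t1 = plug G1' l" "ctxrel E G1 G1'" "(plug G2 r, l) \<in> E" by blast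
      with app show ?thesis by (intro disjI2 exI[of _ "CFun G1 u"] exI[of _ G2] exI[of _ "CFun G1' u1"] exI[of _ l]) (auto intro: ctxrel.intros)
    qed
  qed
next
  case (CRst G)
  from tilde0_Reset_inv[OF CRst.prems[simplified]] show ?case
  proof
    assume "(Reset (plug G r), x) \<in> E"
    then show ?thesis by (intro disjI2 exI[of _ Hole] exI[of _ "CRst G"] exI[of _ Hole] exI[of _ x]) (auto intro: ctxrel.intros)
  next
    assume "\<exists>t1. x = Reset t1 \<and> tilde0 E (plug G r) t1"
    then obtain t1 where rst: "x = Reset t1" "tilde0 E (plug G r) t1" by blast
    from CRst.IH[OF rst(2)] show ?thesis
    proof
      assume "\<exists>G' r'. t1 = plug G' r' \<and> ctxrel E G G' \<and> tilde0 E r r'"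
      then obtain G' r' where "t1 = plug G' r'" "ctxrel E G G'" "tilde0 E r r'" by blast
      with rst show ?thesis by (intro disjI1 exI[of _ "CRst G'"] exI[of _ r']) (auto intro: ctxrel.intros)
    next
      assume "\<exists>G1 G2 G1' l. G = ccomp G1 G2 \<and> t1 = plug G1' l \<and> ctxrel E G1 G1' \<and> (plug G2 r, l) \<in> E"
      then obtain G1 G2 G1' l where "G = ccomp G1 G2" "t1 = plug G1' l" "ctxrel E G1 G1'" "(plug G2 r, l) \<in> E" by blast
      with rst show ?thesis by (intro disjI2 exI[of _ "CRst G1"] exI[of _ G2] exI[of _ "CRst G1'"] exI[of _ l]) (auto intro: ctxrel.intros)
    qed
  qed
qed




context fixes X :: envrel assumes rb: "relaxed_bisim X"
begin

lemma rb_env: "E \<in> fst X \<Longrightarrow> relaxed_env E"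
  using rb[unfolded relaxed_bisim_def, THEN conjunct1] by blast
lemma rb_trip: "(E, t0, t1) \<in> snd X \<Longrightarrow> relaxed_env E \<and> closed t0 \<and> closed t1"
  using rb[unfolded relaxed_bisim_def, THEN conjunct2, THEN conjunct1] by blast
lemma rb3: "(E, t0, t1) \<in> snd X \<Longrightarrow>
       (\<forall>t0'. step t0 t0' \<longrightarrow> (\<exists>t1'. steps t1 t1' \<and> (E, t0', t1') \<in> snd X)) \<and>
       (is_val t0 \<longrightarrow> (\<exists>v1. steps t1 v1 \<and> is_val v1 \<and> E \<union> {(t0, v1)} \<in> fst X)) \<and>
       (stuck t0 \<longrightarrow> (\<exists>t1'. steps t1 t1' \<and> stuck t1' \<and> E \<union> {(t0, t1')} \<in> fst X)) \<and>
       (\<forall>t1'. step t1 t1' \<longrightarrow> (\<exists>t0'. steps t0 t0' \<and> (E, t0', t1') \<in> snd X)) \<and>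
       (is_val t1 \<longrightarrow> (\<exists>v0. steps t0 v0 \<and> is_val v0 \<and> E \<union> {(v0, t1)} \<in> fst X)) \<and>
       (stuck t1 \<longrightarrow> (\<exists>t0'. steps t0 t0' \<and> stuck t0' \<and> E \<union> {(t0', t1)} \<in> fst X))"
  by (rule rb[unfolded relaxed_bisim_def, THEN conjunct2, THEN conjunct2, THEN conjunct1, rule_format])
lemma rb4: "E \<in> fst X \<Longrightarrow>
       (\<forall>s0 s1 v0 v1. (Lam s0, Lam s1) \<in> E \<and> is_val v0 \<and> is_val v1 \<and> tilde E v0 v1 \<longrightarrow>
          (E, subst0 s0 v0, subst0 s1 v1) \<in> snd X) \<and>
       (\<forall>C0 s0 C1 s1 D0 D1. pure C0 \<and> pure C1 \<and> (plug C0 (Shift s0), plug C1 (Shift s1)) \<in> E \<and>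
          pure D0 \<and> pure D1 \<and> hat E D0 D1 \<longrightarrow>
          (E, Reset (subst0 s0 (kont D0 C0)), Reset (subst0 s1 (kont D1 C1))) \<in> snd X)"
  by (rule rb[unfolded relaxed_bisim_def, THEN conjunct2, THEN conjunct2, THEN conjunct2, rule_format])

lemma rb_step: "(E, t0, t1) \<in> snd X \<Longrightarrow> step t0 t0' \<Longrightarrow> \<exists>t1'. steps t1 t1' \<and> (E, t0', t1') \<in> snd X"
  using rb3 by blast
lemma rb_val: "(E, t0, t1) \<in> snd X \<Longrightarrow> is_val t0 \<Longrightarrow> \<exists>v1. steps t1 v1 \<and> is_val v1 \<and> E \<union> {(t0, v1)} \<in> fst X"
  using rb3 by blast
lemma rb_stuck: "(E, t0, t1) \<in> snd X \<Longrightarrow> stuck t0 \<Longrightarrow> \<exists>t1'. steps t1 t1' \<and> stuck t1' \<and> E \<union> {(t0, t1')} \<in> fst X"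
  using rb3 by blast
lemma rb_step': "(E, t0, t1) \<in> snd X \<Longrightarrow> step t1 t1' \<Longrightarrow> \<exists>t0'. steps t0 t0' \<and> (E, t0', t1') \<in> snd X"
  using rb3 by blast
lemma rb_val': "(E, t0, t1) \<in> snd X \<Longrightarrow> is_val t1 \<Longrightarrow> \<exists>v0. steps t0 v0 \<and> is_val v0 \<and> E \<union> {(v0, t1)} \<in> fst X"
  using rb3 by blast
lemma rb_stuck': "(E, t0, t1) \<in> snd X \<Longrightarrow> stuck t1 \<Longrightarrow> \<exists>t0'. steps t0 t0' \<and> stuck t0' \<and> E \<union> {(t0', t1)} \<in> fst X"
  using rb3 by blast
lemma rb_lam: "E \<in> fst X \<Longrightarrow> (Lam s0, Lam s1) \<in> E \<Longrightarrow> is_val v0 \<Longrightarrow> is_val v1 \<Longrightarrow> tilde E v0 v1 \<Longrightarrow>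
  (E, subst0 s0 v0, subst0 s1 v1) \<in> snd X"
  using rb4 by blast
lemma rb_shift: "E \<in> fst X \<Longrightarrow> pure C0 \<Longrightarrow> pure C1 \<Longrightarrow> (plug C0 (Shift s0), plug C1 (Shift s1)) \<in> E \<Longrightarrow>
  pure D0 \<Longrightarrow> pure D1 \<Longrightarrow> hat E D0 D1 \<Longrightarrow>
  (E, Reset (subst0 s0 (kont D0 C0)), Reset (subst0 s1 (kont D1 C1))) \<in> snd X"
  using rb4 by blast

end

definition flipX :: "envrel \<Rightarrow> envrel" where
  "flipX X = (sw ` fst X, (\<lambda>(E, a, b). (sw E, b, a)) ` snd X)"

lemma flip_fst: "E \<in> fst (flipX X) \<longleftrightarrow> sw E \<in> fst X"
proof
  assume "E \<in> fst (flipX X)"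
  then obtain x where "x \<in> fst X" "E = sw x" unfolding flipX_def by auto
  then show "sw E \<in> fst X" by simp
next
  assume "sw E \<in> fst X"
  then have "sw (sw E) \<in> sw ` fst X" by (rule imageI)
  then show "E \<in> fst (flipX X)" unfolding flipX_def by simp
qed

lemma flip_snd: "(E, a, b) \<in> snd (flipX X) \<longleftrightarrow> (sw E, b, a) \<in> snd X"
proof
  assume "(E, a, b) \<in> snd (flipX X)"
  then obtain x where "x \<in> snd X" "(E, a, b) = (\<lambda>(E, a, b). (sw E, b, a)) x" unfolding flipX_def by auto
  then show "(sw E, b, a) \<in> snd X" by (cases x) auto
next
  assume "(sw E, b, a) \<in> snd X"
  then have "(\<lambda>(E, a, b). (sw E, b, a)) (sw E, b, a) \<in> (\<lambda>(E, a, b). (sw E, b, a)) ` snd X" by (rule imageI)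
  then show "(E, a, b) \<in> snd (flipX X)" unfolding flipX_def by simp
qed

lemma relaxed_env_sw: "relaxed_env (sw E) = relaxed_env E"
  unfolding relaxed_env_def by auto

lemma hat_sw: "hat R D0 D1 \<Longrightarrow> hat (sw R) D1 D0"
  by (induction rule: hat.induct) (auto intro: hat.intros simp: tilde_sw)

lemma hat_sw_iff: "hat (sw R) D1 D0 = hat R D0 D1"
  using hat_sw[of R D0 D1] hat_sw[of "sw R" D1 D0] by auto

lemma sw_union_single: "sw (E \<union> {(a, b)}) = sw E \<union> {(b, a)}" by simp

lemma rb_flip: assumes rb: "relaxed_bisim X" shows "relaxed_bisim (flipX X)"
  unfolding relaxed_bisim_def
proof (intro conjI)
  show "\<forall>E\<in>fst (flipX X). relaxed_env E"
  proof
    fix E assume "E \<in> fst (flipX X)"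
    then have "relaxed_env (sw E)" using rb_env[OF rb] by (simp add: flip_fst)
    then show "relaxed_env E" by (simp add: relaxed_env_sw)
  qed
  show "\<forall>(E, t0, t1)\<in>snd (flipX X). relaxed_env E \<and> closed t0 \<and> closed t1"
  proof (intro ballI, clarify)
    fix E t0 t1 assume "(E, t0, t1) \<in> snd (flipX X)"
    then have "relaxed_env (sw E) \<and> closed t1 \<and> closed t0" using rb_trip[OF rb] by (simp add: flip_snd)
    then show "relaxed_env E \<and> closed t0 \<and> closed t1" by (simp add: relaxed_env_sw)
  qed
  show "\<forall>E t0 t1. (E, t0, t1) \<in> snd (flipX X) \<longrightarrow>
       (\<forall>t0'. step t0 t0' \<longrightarrow> (\<exists>t1'. steps t1 t1' \<and> (E, t0', t1') \<in> snd (flipX X))) \<and>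
       (is_val t0 \<longrightarrow> (\<exists>v1. steps t1 v1 \<and> is_val v1 \<and> E \<union> {(t0, v1)} \<in> fst (flipX X))) \<and>
       (stuck t0 \<longrightarrow> (\<exists>t1'. steps t1 t1' \<and> stuck t1' \<and> E \<union> {(t0, t1')} \<in> fst (flipX X))) \<and>
       (\<forall>t1'. step t1 t1' \<longrightarrow> (\<exists>t0'. steps t0 t0' \<and> (E, t0', t1') \<in> snd (flipX X))) \<and>
       (is_val t1 \<longrightarrow> (\<exists>v0. steps t0 v0 \<and> is_val v0 \<and> E \<union> {(v0, t1)} \<in> fst (flipX X))) \<and>
       (stuck t1 \<longrightarrow> (\<exists>t0'. steps t0 t0' \<and> stuck t0' \<and> E \<union> {(t0', t1)} \<in> fst (flipX X)))"
  proof (intro allI impI)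
    fix E t0 t1 assume "(E, t0, t1) \<in> snd (flipX X)"
    then have m: "(sw E, t1, t0) \<in> snd X" by (simp add: flip_snd)
    show "(\<forall>t0'. step t0 t0' \<longrightarrow> (\<exists>t1'. steps t1 t1' \<and> (E, t0', t1') \<in> snd (flipX X))) \<and>
       (is_val t0 \<longrightarrow> (\<exists>v1. steps t1 v1 \<and> is_val v1 \<and> E \<union> {(t0, v1)} \<in> fst (flipX X))) \<and>
       (stuck t0 \<longrightarrow> (\<exists>t1'. steps t1 t1' \<and> stuck t1' \<and> E \<union> {(t0, t1')} \<in> fst (flipX X))) \<and>
       (\<forall>t1'. step t1 t1' \<longrightarrow> (\<exists>t0'. steps t0 t0' \<and> (E, t0', t1') \<in> snd (flipX X))) \<and>
       (is_val t1 \<longrightarrow> (\<exists>v0. steps t0 v0 \<and> is_val v0 \<and> E \<union> {(v0, t1)} \<in> fst (flipX X))) \<and>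
       (stuck t1 \<longrightarrow> (\<exists>t0'. steps t0 t0' \<and> stuck t0' \<and> E \<union> {(t0', t1)} \<in> fst (flipX X)))"
    proof (intro conjI)
    show "\<forall>t0'. step t0 t0' \<longrightarrow> (\<exists>t1'. steps t1 t1' \<and> (E, t0', t1') \<in> snd (flipX X))"
      using rb_step'[OF rb m] by (auto simp: flip_snd)
    show "is_val t0 \<longrightarrow> (\<exists>v1. steps t1 v1 \<and> is_val v1 \<and> E \<union> {(t0, v1)} \<in> fst (flipX X))"
      using rb_val'[OF rb m] by (auto simp: flip_fst)
    show "stuck t0 \<longrightarrow> (\<exists>t1'. steps t1 t1' \<and> stuck t1' \<and> E \<union> {(t0, t1')} \<in> fst (flipX X))"
      using rb_stuck'[OF rb m] by (auto simp: flip_fst)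
    show "\<forall>t1'. step t1 t1' \<longrightarrow> (\<exists>t0'. steps t0 t0' \<and> (E, t0', t1') \<in> snd (flipX X))"
      using rb_step[OF rb m] by (auto simp: flip_snd)
    show "is_val t1 \<longrightarrow> (\<exists>v0. steps t0 v0 \<and> is_val v0 \<and> E \<union> {(v0, t1)} \<in> fst (flipX X))"
      using rb_val[OF rb m] by (auto simp: flip_fst)
    show "stuck t1 \<longrightarrow> (\<exists>t0'. steps t0 t0' \<and> stuck t0' \<and> E \<union> {(t0', t1)} \<in> fst (flipX X))"
      using rb_stuck[OF rb m] by (auto simp: flip_fst)
    qed
  qed
  show "\<forall>E\<in>fst (flipX X).
       (\<forall>s0 s1 v0 v1. (Lam s0, Lam s1) \<in> E \<and> is_val v0 \<and> is_val v1 \<and> tilde E v0 v1 \<longrightarrow>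
          (E, subst0 s0 v0, subst0 s1 v1) \<in> snd (flipX X)) \<and>
       (\<forall>C0 s0 C1 s1 D0 D1. pure C0 \<and> pure C1 \<and> (plug C0 (Shift s0), plug C1 (Shift s1)) \<in> E \<and>
          pure D0 \<and> pure D1 \<and> hat E D0 D1 \<longrightarrow>
          (E, Reset (subst0 s0 (kont D0 C0)), Reset (subst0 s1 (kont D1 C1))) \<in> snd (flipX X))"
  proof (intro ballI conjI allI impI)
    fix E assume "E \<in> fst (flipX X)"
    then have m: "sw E \<in> fst X" by (simp add: flip_fst)
    fix s0 s1 v0 v1 assume h: "(Lam s0, Lam s1) \<in> E \<and> is_val v0 \<and> is_val v1 \<and> tilde E v0 v1"
    then have "tilde (sw E) v1 v0" by (simp add: tilde_sw)
    with h rb_lam[OF rb m, of s1 s0 v1 v0] show "(E, subst0 s0 v0, subst0 s1 v1) \<in> snd (flipX X)"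
      by (simp add: flip_snd)
  next
    fix E assume "E \<in> fst (flipX X)"
    then have m: "sw E \<in> fst X" by (simp add: flip_fst)
    fix C0 s0 C1 s1 D0 D1 assume h: "pure C0 \<and> pure C1 \<and> (plug C0 (Shift s0), plug C1 (Shift s1)) \<in> E \<and>
          pure D0 \<and> pure D1 \<and> hat E D0 D1"
    then have "hat (sw E) D1 D0" by (simp add: hat_sw_iff)
    with h rb_shift[OF rb m, of C1 C0 s1 s0 D1 D0]
    show "(E, Reset (subst0 s0 (kont D0 C0)), Reset (subst0 s1 (kont D1 C1))) \<in> snd (flipX X)"
      by (simp add: flip_snd)
  qed
qed




definition W :: "envrel \<Rightarrow> env \<Rightarrow> tm \<Rightarrow> tm \<Rightarrow> bool" where
  "W X E a b = (closed a \<and> closed b \<and>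
     ((\<exists>F0 F1 u0 u1. a = plug F0 u0 \<and> b = plug F1 u1 \<and> (E, u0, u1) \<in> snd X \<and>
         ctxrel E F0 F1 \<and> evctx F0 \<and> evctx F1) \<or>
      (E \<in> fst X \<and> tilde0 E a b)))"

lemma comp_Hole[simp]: "ccomp F Hole = F" by (induction F) auto

lemma pure_evctx: "pure F \<Longrightarrow> evctx F" by (induction F) auto

lemma W_flip: "W (flipX X) (sw E) b a = W X E a b"
proof -
  have "(\<exists>F0 F1 u0 u1. b = plug F0 u0 \<and> a = plug F1 u1 \<and> (sw E, u0, u1) \<in> snd (flipX X) \<and>
         ctxrel (sw E) F0 F1 \<and> evctx F0 \<and> evctx F1) =
        (\<exists>F0 F1 u0 u1. a = plug F0 u0 \<and> b = plug F1 u1 \<and> (E, u0, u1) \<in> snd X \<and>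
         ctxrel E F0 F1 \<and> evctx F0 \<and> evctx F1)"
    by (auto simp: flip_snd ctxrel_sw_iff)
  moreover have "(sw E \<in> fst (flipX X) \<and> tilde0 (sw E) b a) = (E \<in> fst X \<and> tilde0 E a b)"
    by (simp add: flip_fst tilde0_sw_iff)
  ultimately show ?thesis unfolding W_def by blast
qed

lemma not_stuck_redex: "evctx G \<Longrightarrow> contr r c \<Longrightarrow> \<not> is_val (plug G r) \<and> \<not> stuck (plug G r)"
proof -
  assume a: "evctx G" "contr r c"
  then have "step (plug G r) (plug G c)" unfolding step_iff by blast
  moreover have "\<not> is_val (plug G r)" using a is_val_plug contr_not_val by blast
  ultimately show ?thesis unfolding stuck_def by blast
qed

lemma stuck_leaf_form: "relaxed_env E \<Longrightarrow> (a, l) \<in> E \<Longrightarrow> \<not> is_val a \<Longrightarrow> \<exists>C s. pure C \<and> l = plug C (Shift s) \<and> closed l"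
  unfolding relaxed_env_def using stuck_form by blast

lemma leaf_not_redex: "relaxed_env E \<Longrightarrow> (plug G r, l) \<in> E \<Longrightarrow> evctx G \<Longrightarrow> contr r c \<Longrightarrow> False"
  unfolding relaxed_env_def using not_stuck_redex by blast

context fixes X :: envrel assumes rb: "relaxed_bisim X"
begin

lemma T2_step:
  assumes EX: "E \<in> fst X" and tl: "tilde0 E a b" and ca: "closed a" and cb: "closed b" and st: "step a a'"
  shows "\<exists>b'. step b b' \<and> W X E a' b'"
proof -
  have re: "relaxed_env E" using rb_env[OF rb EX] .
  have ec: "envclosed E" using relaxed_envclosed[OF re] .
  from st obtain F r c where F: "evctx F" "contr r c" "a = plug F r" "a' = plug F c"
    unfolding step_iff by blast
  have ca': "closed a'" using step_closed[OF st ca] .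
  from decomp[of E F r b] tl F(3) consider
    (leaf) G1 G2 G1' l where "F = ccomp G1 G2" "b = plug G1' l" "ctxrel E G1 G1'" "(plug G2 r, l) \<in> E"
  | (ok) F' r' where "b = plug F' r'" "ctxrel E F F'" "tilde0 E r r'" by blast
  then show ?thesis
  proof cases
    case leaf
    then show ?thesis using leaf_not_redex[OF re leaf(4) _ F(2)] F(1) by simp
  next
    case ok
    have F': "evctx F'" using ctxrel_evctx[OF ok(2) re F(1)] .
    have cF: "closedC 0 F" "closed_at 0 r" using ca F(3) by (auto simp: closed_def)
    have cF': "closedC 0 F'" "closed_at 0 r'" using cb ok(1) by (auto simp: closed_def)
    have rnotleaf: "(r, x) \<notin> E" for x using leaf_not_redex[OF re _ _ F(2), of Hole x] by auto
    from F(2) show ?thesis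
    proof (cases rule: contr.cases)
      case (1 v t)
      from tilde0_App_inv[of E "Lam t" v r'] ok(3) 1 rnotleaf obtain x1 x2 where
        x: "r' = App x1 x2" "tilde0 E (Lam t) x1" "tilde0 E v x2" by auto
      have vx2: "is_val x2" using tilde0_val[OF x(3) re] 1 by simp
      have cv: "closed v" "closed x2" "closed_at 1 t" using cF cF' 1 x by (auto simp: closed_def)
      from tilde0_Lam_inv[OF x(2)] show ?thesis
      proof
        assume lf: "(Lam t, x1) \<in> E"
        then have "is_val x1" using re unfolding relaxed_env_def stuck_def by auto
        then obtain s1 where s1: "x1 = Lam s1" by (cases x1) auto
        have tv: "tilde E v x2" using x(3) cv by (simp add: tilde_def)
        have trip: "(E, subst0 t v, subst0 s1 x2) \<in> snd X"
          using rb_lam[OF rb EX, of t s1 v x2] lf s1 1 vx2 tv by simp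
        let ?b' = "plug F' (subst0 s1 x2)"
        have sb: "step b ?b'" using step.beta[OF F' vx2, of s1] ok(1) x(1) s1 by simp
        have "W X E a' ?b'" unfolding W_def
          using ca' step_closed[OF sb cb] F(4) 1 trip ok(2) F(1) F' by blast
        with sb show ?thesis by blast
      next
        assume "\<exists>x. x1 = Lam x \<and> tilde0 E t x"
        then obtain t' where t': "x1 = Lam t'" "tilde0 E t t'" by blast
        let ?b' = "plug F' (subst0 t' x2)"
        have sb: "step b ?b'" using step.beta[OF F' vx2, of t'] ok(1) x(1) t' by simp
        have "tilde0 E (subst0 t v) (subst0 t' x2)"
          using tilde0_subst0[OF ec t'(2) x(3)] cv by simp
        then have "tilde0 E a' ?b'" using ctxrel_plug[OF ok(2)] F(4) 1 by simp
        then have "W X E a' ?b'" unfolding W_def using ca' step_closed[OF sb cb] EX by blast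
        with sb show ?thesis by blast
      qed
    next
      case (2 G t)
      from tilde0_Reset_inv[of E "plug G (Shift t)" r'] ok(3) 2 rnotleaf obtain x where
        x: "r' = Reset x" "tilde0 E (plug G (Shift t)) x" by auto
      have cG: "closedC 0 G" "closed_at 1 t" using cF 2 by auto
      have cx: "closed x" using cF' x by (simp add: closed_def)
      have leafcase: "\<exists>b'. step b b' \<and> W X E a' b'"
        if lc: "G = ccomp G1 G2" "x = plug G1' l" "ctxrel E G1 G1'" "(plug G2 (Shift t), l) \<in> E" for G1 G2 G1' l
      proof -
        have pG: "pure G1" "pure G2" using 2 lc by auto
        obtain C1 s1 where C1: "pure C1" "l = plug C1 (Shift s1)" "closed l"
          using stuck_leaf_form[OF re lc(4)] plug_shift_not_val by blast
        have pG1': "pure G1'" using ctxrel_pure[OF lc(3) re pG(1)] .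
        have h: "hat E G1 G1'"
          using ctxrel_hat[OF lc(3) pure_evctx[OF pG(1)] pure_evctx[OF pG1']] cG lc cx
          by (simp add: closed_def)
        have trip: "(E, Reset (subst0 t (kont G1 G2)), Reset (subst0 s1 (kont G1' C1))) \<in> snd X"
          using rb_shift[OF rb EX pG(2) C1(1) lc(4)[unfolded C1(2)] pG(1) pG1' h] .
        let ?b' = "plug F' (Reset (subst0 s1 (kont Hole (ccomp G1' C1))))"
        have sb: "step b ?b'" using step.shift[OF F', of "ccomp G1' C1" s1] pG1' C1 ok(1) x(1) lc(2)
          by simp
        have "W X E a' ?b'" unfolding W_def
          using ca' step_closed[OF sb cb] F(4) 2 trip ok(2) F(1) F' lc(1)
          by (auto simp: kont_comp)
        with sb show ?thesis by blast
      qed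
      from decomp[of E G "Shift t" x] x(2) consider
        (leaf) G1 G2 G1' l where "G = ccomp G1 G2" "x = plug G1' l" "ctxrel E G1 G1'" "(plug G2 (Shift t), l) \<in> E"
      | (ok2) G' r'' where "x = plug G' r''" "ctxrel E G G'" "tilde0 E (Shift t) r''" by blast
      then show ?thesis
      proof cases
        case leaf
        then show ?thesis using leafcase by blast
      next
        case ok2
        from tilde0_Shift_inv[OF ok2(3)] show ?thesis
        proof
          assume "(Shift t, r'') \<in> E"
          then show ?thesis using leafcase[of G Hole G' r''] ok2 by simp
        next
          assume "\<exists>x. r'' = Shift x \<and> tilde0 E t x"
          then obtain t' where t': "r'' = Shift t'" "tilde0 E t t'" by blast
          have pG': "pure G'" using ctxrel_pure[OF ok2(2) re] 2 by simp
          have cG': "closedC 0 G'" using cx ok2 by (simp add: closed_def)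
          let ?b' = "plug F' (Reset (subst0 t' (kont Hole G')))"
          have sb: "step b ?b'" using step.shift[OF F' pG', of t'] ok(1) x(1) ok2(1) t' by simp
          have tk: "tilde0 E (kont Hole G) (kont Hole G')"
            using kont_closed[OF cG(1)] kont_closed[OF cG']
              ctxrel_plug[OF ok2(2) tilde0.var[of E 0]]
            by (auto intro: tilde0.intros)
          have "tilde0 E (subst0 t (kont Hole G)) (subst0 t' (kont Hole G'))"
            using tilde0_subst0[OF ec t'(2) tk] closed_kont[OF cG(1)] closed_kont[OF cG'] by simp
          then have "tilde0 E a' ?b'" using ctxrel_plug[OF ok(2)] F(4) 2 by (auto intro: tilde0.intros)
          then have "W X E a' ?b'" unfolding W_def using ca' step_closed[OF sb cb] EX by blast
          with sb show ?thesis by blast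
        qed
      qed
    next
      case 3
      from tilde0_Reset_inv[of E c r'] ok(3) 3 rnotleaf obtain y where
        y: "r' = Reset y" "tilde0 E c y" by auto
      have vy: "is_val y" using tilde0_val[OF y(2) re] 3 by simp
      let ?b' = "plug F' y"
      have sb: "step b ?b'" using step.reset[OF F' vy] ok(1) y(1) by simp
      have "tilde0 E a' ?b'" using ctxrel_plug[OF ok(2) y(2)] F(4) 3 by simp
      then have "W X E a' ?b'" unfolding W_def using ca' step_closed[OF sb cb] EX by blast
      with sb show ?thesis by blast
    qed
  qed
qed

end



context fixes X :: envrel assumes rb: "relaxed_bisim X"
begin

lemma W_step:
  assumes w: "W X E a b" and st: "step a a'"
  shows "\<exists>E3 b'. E \<subseteq> E3 \<and> steps b b' \<and> W X E3 a' b'"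
proof -
  from w have ca: "closed a" and cb: "closed b" unfolding W_def by auto
  from w consider
    (t1) F0 F1 u0 u1 where "a = plug F0 u0" "b = plug F1 u1" "(E, u0, u1) \<in> snd X"
         "ctxrel E F0 F1" "evctx F0" "evctx F1"
  | (t2) "E \<in> fst X" "tilde0 E a b" unfolding W_def by blast
  then show ?thesis
  proof cases
    case t2
    then show ?thesis using T2_step[OF rb t2 ca cb st] by blast
  next
    case t1
    have tr: "relaxed_env E" "closed u0" "closed u1" using rb_trip[OF rb t1(3)] by auto
    have gen: "\<exists>E3 b'. E \<subseteq> E3 \<and> steps b b' \<and> W X E3 a' b'"
      if u: "steps u1 u1'" "E \<union> {(u0, u1')} \<in> fst X" for u1'
    proof -
      let ?E3 = "E \<union> {(u0, u1')}"
      let ?b2 = "plug F1 u1'"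
      have sb2: "steps b ?b2" using steps_ctx[OF u(1) t1(6)] t1(2) by simp
      have "tilde0 ?E3 a ?b2" using ctxrel_plug[OF ctxrel_mono[OF t1(4), of ?E3]] t1(1)
        by (auto intro: tilde0.base)
      from T2_step[OF rb u(2) this ca steps_closed[OF sb2 cb] st] obtain b' where
        "step ?b2 b'" "W X ?E3 a' b'" by blast
      with sb2 show ?thesis by (intro exI[of _ ?E3] exI[of _ b']) auto
    qed
    show ?thesis
    proof (cases "is_val u0")
      case True
      from rb_val[OF rb t1(3) True] gen show ?thesis by blast
    next
      case nv: False
      show ?thesis
      proof (cases "stuck u0")
        case True
        from rb_stuck[OF rb t1(3) True] gen show ?thesis by blast
      next
        case False
        with nv obtain u0' where su: "step u0 u0'" unfolding stuck_def by blast
        have "step a (plug F0 u0')" using step_ctx[OF su t1(5)] t1(1) by simp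
        then have a': "a' = plug F0 u0'" using step_det st by blast
        from rb_step[OF rb t1(3) su] obtain u1' where u1': "steps u1 u1'" "(E, u0', u1') \<in> snd X" by blast
        have sb: "steps b (plug F1 u1')" using steps_ctx[OF u1'(1) t1(6)] t1(2) by simp
        have "W X E a' (plug F1 u1')" unfolding W_def
          using step_closed[OF st ca] steps_closed[OF sb cb] a' u1'(2) t1(4,5,6) by blast
        with sb show ?thesis by blast
      qed
    qed
  qed
qed

lemma W_val:
  assumes w: "W X E a b" and va: "is_val a"
  shows "\<exists>E3 v1. E \<subseteq> E3 \<and> steps b v1 \<and> is_val v1 \<and> E3 \<in> fst X \<and> tilde E3 a v1"
proof -
  from w have ca: "closed a" and cb: "closed b" unfolding W_def by auto
  from w consider
    (t1) F0 F1 u0 u1 where "a = plug F0 u0" "b = plug F1 u1" "(E, u0, u1) \<in> snd X"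
         "ctxrel E F0 F1" "evctx F0" "evctx F1"
  | (t2) "E \<in> fst X" "tilde0 E a b" unfolding W_def by blast
  then show ?thesis
  proof cases
    case t2
    have "is_val b" using tilde0_val[OF t2(2) rb_env[OF rb t2(1)] va] .
    then show ?thesis using t2 ca cb by (intro exI[of _ E] exI[of _ b]) (auto simp: tilde_def)
  next
    case t1
    have "F0 = Hole" "is_val u0" using is_val_plug[of F0 u0] va t1(1) by auto
    then have F1: "F1 = Hole" using ctxrel_Hole t1(4) by simp
    from rb_val[OF rb t1(3) \<open>is_val u0\<close>] obtain v1 where
      v1: "steps u1 v1" "is_val v1" "E \<union> {(u0, v1)} \<in> fst X" by blast
    have "closed v1" using steps_closed[OF v1(1)] rb_trip[OF rb t1(3)] by blast
    then show ?thesis using v1 t1 F1 \<open>F0 = Hole\<close> ca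
      by (intro exI[of _ "E \<union> {(u0, v1)}"] exI[of _ v1]) (auto simp: tilde_def intro: tilde0.base)
  qed
qed

lemma one_side_a:
  assumes "steps p0 a" "steps p1 b" "W X E a b" "step p0 p0'"
  shows "\<exists>a' b' E3. E \<subseteq> E3 \<and> steps p0' a' \<and> steps p1 b' \<and> W X E3 a' b'"
  using assms(1)
proof (cases rule: converse_rtranclpE)
  case base
  from W_step[OF assms(3) assms(4)[unfolded base]] obtain E3 b' where
    "E \<subseteq> E3" "steps b b'" "W X E3 p0' b'" by blast
  with assms(2) show ?thesis by (meson rtranclp.rtrancl_refl rtranclp_trans)
next
  case (step y)
  then have "y = p0'" using step_det assms(4) by blast
  with step assms show ?thesis by blast
qed

lemma one_side_b:
  assumes "steps p0 a" "steps p1 b" "W X E a b" "step p0 v0" "is_val v0"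
  shows "\<exists>v1 E4. E \<subseteq> E4 \<and> steps p1 v1 \<and> is_val v1 \<and> E4 \<in> fst X \<and> tilde E4 v0 v1"
proof -
  from one_side_a[OF assms(1-4)] obtain a' b' E3 where
    h: "E \<subseteq> E3" "steps v0 a'" "steps p1 b'" "W X E3 a' b'" by blast
  have "a' = v0" using h(2) val_no_step[OF assms(5)]
    by (cases rule: converse_rtranclpE) auto
  from W_val[OF h(4)[unfolded this] assms(5)] obtain E4 v1 where
    "E3 \<subseteq> E4" "steps b' v1" "is_val v1" "E4 \<in> fst X" "tilde E4 v0 v1" by blast
  with h show ?thesis by (meson order_trans rtranclp_trans)
qed

end



definition Eok :: "env \<Rightarrow> env \<Rightarrow> bool" where
  "Eok E3 E' = (\<forall>(a, b) \<in> E'. is_val a \<and> is_val b \<and> tilde E3 a b)"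

definition Yrel :: "envrel \<Rightarrow> envrel" where
  "Yrel X = ({E'. \<exists>E3 \<in> fst X. Eok E3 E'},
    {(E', a0, b0). closed a0 \<and> closed b0 \<and> (\<exists>E2. Eok E2 E' \<and> (W X E2 a0 b0 \<or>
        (is_prog a0 \<and> is_prog b0 \<and> (\<exists>a b. steps a0 a \<and> steps b0 b \<and> W X E2 a b))))})"

lemma Yfst: "E' \<in> fst (Yrel X) \<longleftrightarrow> (\<exists>E3 \<in> fst X. Eok E3 E')"
  by (simp add: Yrel_def)

lemma Ysnd: "(E', a0, b0) \<in> snd (Yrel X) \<longleftrightarrow> closed a0 \<and> closed b0 \<and> (\<exists>E2. Eok E2 E' \<and> (W X E2 a0 b0 \<or>
        (is_prog a0 \<and> is_prog b0 \<and> (\<exists>a b. steps a0 a \<and> steps b0 b \<and> W X E2 a b))))"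
  by (simp add: Yrel_def)

lemma Eok_mono: "Eok E2 E' \<Longrightarrow> E2 \<subseteq> E3 \<Longrightarrow> Eok E3 E'"
  unfolding Eok_def using tilde_mono by blast

lemma Eok_prog_env: "Eok E2 E' \<Longrightarrow> prog_env E'"
  unfolding Eok_def prog_env_def tilde_def by blast

lemma Eok_tilde0: "Eok E2 E' \<Longrightarrow> \<forall>(a, b) \<in> E'. tilde0 E2 a b"
  unfolding Eok_def tilde_def by blast

lemma Eok_tilde: "Eok E2 E' \<Longrightarrow> tilde E' a b \<Longrightarrow> tilde E2 a b"
  unfolding tilde_def using Eok_tilde0 tilde0_trans_env by blast

lemma Eok_ins: "Eok E2 E' \<Longrightarrow> is_val v0 \<Longrightarrow> is_val v1 \<Longrightarrow> tilde E2 v0 v1 \<Longrightarrow> Eok E2 ({(v0, v1)} \<union> E')"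
  unfolding Eok_def by auto

lemma W_wrap: "W X E t0 t1 \<Longrightarrow> ctxrel E D0 D1 \<Longrightarrow> evctx D0 \<Longrightarrow> evctx D1 \<Longrightarrow> closedC 0 D0 \<Longrightarrow> closedC 0 D1 \<Longrightarrow>
  W X E (Reset (plug D0 t0)) (Reset (plug D1 t1))"
  unfolding W_def
proof (elim conjE disjE exE)
  fix F0 F1 u0 u1
  assume h: "closed t0" "closed t1" "ctxrel E D0 D1" "evctx D0" "evctx D1" "closedC 0 D0" "closedC 0 D1"
    "t0 = plug F0 u0" "t1 = plug F1 u1" "(E, u0, u1) \<in> snd X" "ctxrel E F0 F1" "evctx F0" "evctx F1"
  have "ctxrel E (CRst (ccomp D0 F0)) (CRst (ccomp D1 F1))"
    using ctxrel_comp[OF h(3) h(11)] by (rule ctxrel.intros)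
  with h show "closed (Reset (plug D0 t0)) \<and> closed (Reset (plug D1 t1)) \<and>
    ((\<exists>F0 F1 u0 u1. Reset (plug D0 t0) = plug F0 u0 \<and> Reset (plug D1 t1) = plug F1 u1 \<and>
       (E, u0, u1) \<in> snd X \<and> ctxrel E F0 F1 \<and> evctx F0 \<and> evctx F1) \<or>
     (E \<in> fst X \<and> tilde0 E (Reset (plug D0 t0)) (Reset (plug D1 t1))))"
    by (intro conjI disjI1 exI[of _ "CRst (ccomp D0 F0)"] exI[of _ "CRst (ccomp D1 F1)"] exI[of _ u0] exI[of _ u1])
       (auto simp: closed_def)
next
  assume h: "closed t0" "closed t1" "ctxrel E D0 D1" "evctx D0" "evctx D1" "closedC 0 D0" "closedC 0 D1"
    "E \<in> fst X" "tilde0 E t0 t1"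
  then show "closed (Reset (plug D0 t0)) \<and> closed (Reset (plug D1 t1)) \<and>
    ((\<exists>F0 F1 u0 u1. Reset (plug D0 t0) = plug F0 u0 \<and> Reset (plug D1 t1) = plug F1 u1 \<and>
       (E, u0, u1) \<in> snd X \<and> ctxrel E F0 F1 \<and> evctx F0 \<and> evctx F1) \<or>
     (E \<in> fst X \<and> tilde0 E (Reset (plug D0 t0)) (Reset (plug D1 t1))))"
    by (auto simp: closed_def intro: tilde0.rst ctxrel_plug)
qed

lemma Y_W: "(E', a0, b0) \<in> snd (Yrel X) \<Longrightarrow>
  \<exists>E2 a b. Eok E2 E' \<and> steps a0 a \<and> steps b0 b \<and> W X E2 a b"
  unfolding Ysnd by blast

lemma Y_main:
  assumes rb: "relaxed_bisim X"
  shows "prog_bisim (Yrel X)"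
  unfolding prog_bisim_def
proof (intro conjI)
  have rbf: "relaxed_bisim (flipX X)" using rb_flip[OF rb] .
  show "\<forall>E\<in>fst (Yrel X). prog_env E" using Eok_prog_env by (auto simp: Yfst)
  show "\<forall>(E, t0, t1)\<in>snd (Yrel X). prog_env E \<and> closed t0 \<and> closed t1"
    using Eok_prog_env by (auto simp: Ysnd)
  show "\<forall>E t0 t1. (E, t0, t1) \<in> snd (Yrel X) \<and> \<not> (is_prog t0 \<and> is_prog t1) \<longrightarrow>
       (\<forall>D0 D1. pure D0 \<and> pure D1 \<and> hat E D0 D1 \<longrightarrow>
          (E, Reset (plug D0 t0), Reset (plug D1 t1)) \<in> snd (Yrel X))"
  proof (intro allI impI, elim conjE)
    fix E' t0 t1 D0 D1
    assume m: "(E', t0, t1) \<in> snd (Yrel X)" and np: "\<not> (is_prog t0 \<and> is_prog t1)"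
      and d: "pure D0" "pure D1" "hat E' D0 D1"
    from m np obtain E2 where e2: "Eok E2 E'" "W X E2 t0 t1" unfolding Ysnd by blast
    from hat_ctxrel[OF d(3)] have hc: "ctxrel E' D0 D1" "evctx D0" "evctx D1" "closedC 0 D0" "closedC 0 D1"
      by auto
    have "ctxrel E2 D0 D1" using ctxrel_trans_env[OF hc(1) Eok_tilde0[OF e2(1)]] .
    then have w: "W X E2 (Reset (plug D0 t0)) (Reset (plug D1 t1))"
      using W_wrap[OF e2(2)] hc by blast
    then show "(E', Reset (plug D0 t0), Reset (plug D1 t1)) \<in> snd (Yrel X)"
      unfolding Ysnd using e2(1) unfolding W_def by blast
  qed
  show "\<forall>E p0 p1. (E, p0, p1) \<in> snd (Yrel X) \<and> is_prog p0 \<and> is_prog p1 \<longrightarrow>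
       (\<forall>p0'. step p0 p0' \<and> is_prog p0' \<longrightarrow>
          (\<exists>p1'. steps p1 p1' \<and> is_prog p1' \<and> (E, p0', p1') \<in> snd (Yrel X))) \<and>
       (\<forall>v0. step p0 v0 \<and> is_val v0 \<longrightarrow>
          (\<exists>v1. steps p1 v1 \<and> is_val v1 \<and> {(v0, v1)} \<union> E \<in> fst (Yrel X))) \<and>
       (\<forall>p1'. step p1 p1' \<and> is_prog p1' \<longrightarrow>
          (\<exists>p0'. steps p0 p0' \<and> is_prog p0' \<and> (E, p0', p1') \<in> snd (Yrel X))) \<and>
       (\<forall>v1. step p1 v1 \<and> is_val v1 \<longrightarrow>
          (\<exists>v0. steps p0 v0 \<and> is_val v0 \<and> {(v0, v1)} \<union> E \<in> fst (Yrel X)))"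
  proof (intro allI impI, elim conjE)
    fix E' p0 p1
    assume m: "(E', p0, p1) \<in> snd (Yrel X)" and pp: "is_prog p0" "is_prog p1"
    have cp: "closed p0" "closed p1" using m unfolding Ysnd by auto
    from Y_W[OF m] obtain E2 a b where w: "Eok E2 E'" "steps p0 a" "steps p1 b" "W X E2 a b" by blast
    have wf: "W (flipX X) (sw E2) b a" using w(4) by (simp add: W_flip)
    show "(\<forall>p0'. step p0 p0' \<and> is_prog p0' \<longrightarrow>
          (\<exists>p1'. steps p1 p1' \<and> is_prog p1' \<and> (E', p0', p1') \<in> snd (Yrel X))) \<and>
       (\<forall>v0. step p0 v0 \<and> is_val v0 \<longrightarrow>
          (\<exists>v1. steps p1 v1 \<and> is_val v1 \<and> {(v0, v1)} \<union> E' \<in> fst (Yrel X))) \<and>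
       (\<forall>p1'. step p1 p1' \<and> is_prog p1' \<longrightarrow>
          (\<exists>p0'. steps p0 p0' \<and> is_prog p0' \<and> (E', p0', p1') \<in> snd (Yrel X))) \<and>
       (\<forall>v1. step p1 v1 \<and> is_val v1 \<longrightarrow>
          (\<exists>v0. steps p0 v0 \<and> is_val v0 \<and> {(v0, v1)} \<union> E' \<in> fst (Yrel X)))"
    proof (intro conjI allI impI; elim conjE)
      fix p0' assume s: "step p0 p0'" "is_prog p0'"
      from one_side_a[OF rb w(2,3,4) s(1)] obtain a' b' E3 where
        h: "E2 \<subseteq> E3" "steps p0' a'" "steps p1 b'" "W X E3 a' b'" by blast
      have "(E', p0', p1) \<in> snd (Yrel X)" unfolding Ysnd
        using step_closed[OF s(1) cp(1)] cp(2) Eok_mono[OF w(1) h(1)] s(2) pp(2) h by blast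
      then show "\<exists>p1'. steps p1 p1' \<and> is_prog p1' \<and> (E', p0', p1') \<in> snd (Yrel X)"
        using pp(2) by blast
    next
      fix v0 assume s: "step p0 v0" "is_val v0"
      from one_side_b[OF rb w(2,3,4) s] obtain v1 E4 where
        h: "E2 \<subseteq> E4" "steps p1 v1" "is_val v1" "E4 \<in> fst X" "tilde E4 v0 v1" by blast
      have "{(v0, v1)} \<union> E' \<in> fst (Yrel X)" unfolding Yfst
        using Eok_ins[OF Eok_mono[OF w(1) h(1)] s(2) h(3) h(5)] h(4) by blast
      then show "\<exists>v1. steps p1 v1 \<and> is_val v1 \<and> {(v0, v1)} \<union> E' \<in> fst (Yrel X)"
        using h by blast
    next
      fix p1' assume s: "step p1 p1'" "is_prog p1'"
      from one_side_a[OF rbf w(3,2) wf s(1)] obtain b' a' E3 where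
        h: "sw E2 \<subseteq> E3" "steps p1' b'" "steps p0 a'" "W (flipX X) E3 b' a'" by blast
      have h4: "W X (sw E3) a' b'" using h(4) W_flip[of X "sw E3" b' a'] by simp
      have "E2 \<subseteq> sw E3" using h(1) by simp
      then have "(E', p0, p1') \<in> snd (Yrel X)" unfolding Ysnd
        using step_closed[OF s(1) cp(2)] cp(1) Eok_mono[OF w(1)] s(2) pp(1) h(2,3) h4 by blast
      then show "\<exists>p0'. steps p0 p0' \<and> is_prog p0' \<and> (E', p0', p1') \<in> snd (Yrel X)"
        using pp(1) by blast
    next
      fix v1 assume s: "step p1 v1" "is_val v1"
      from one_side_b[OF rbf w(3,2) wf s] obtain v0 E4 where
        h: "sw E2 \<subseteq> E4" "steps p0 v0" "is_val v0" "E4 \<in> fst (flipX X)" "tilde E4 v1 v0" by blast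
      have h4: "sw E4 \<in> fst X" using h(4) by (simp add: flip_fst)
      have h5: "tilde (sw E4) v0 v1" using h(5) tilde_sw[of E4 v0 v1] by simp
      have "E2 \<subseteq> sw E4" using h(1) by simp
      then have "{(v0, v1)} \<union> E' \<in> fst (Yrel X)" unfolding Yfst
        using Eok_ins[OF Eok_mono[OF w(1)] h(3) s(2) h5] h4 by blast
      then show "\<exists>v0. steps p0 v0 \<and> is_val v0 \<and> {(v0, v1)} \<union> E' \<in> fst (Yrel X)"
        using h by blast
    qed
  qed
  show "\<forall>E\<in>fst (Yrel X). \<forall>s0 s1 v0 v1. (Lam s0, Lam s1) \<in> E \<and> is_val v0 \<and> is_val v1 \<and> tilde E v0 v1 \<longrightarrow>
          (E, subst0 s0 v0, subst0 s1 v1) \<in> snd (Yrel X)"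
  proof (intro ballI allI impI, elim conjE)
    fix E' s0 s1 v0 v1
    assume e: "E' \<in> fst (Yrel X)" and h: "(Lam s0, Lam s1) \<in> E'" "is_val v0" "is_val v1" "tilde E' v0 v1"
    from e obtain E3 where e3: "E3 \<in> fst X" "Eok E3 E'" unfolding Yfst by blast
    have tv: "tilde E3 v0 v1" using Eok_tilde[OF e3(2) h(4)] .
    have tl: "tilde E3 (Lam s0) (Lam s1)" using e3(2) h(1) unfolding Eok_def by blast
    have re: "relaxed_env E3" using rb_env[OF rb e3(1)] .
    have cl: "closed (subst0 s0 v0)" "closed (subst0 s1 v1)"
      using tl tv by (auto simp: tilde_def closed_def subst0_def intro!: closed_subst)
    have tl0: "tilde0 E3 (Lam s0) (Lam s1)" using tl by (simp add: tilde_def)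
    from tilde0_Lam_inv[OF tl0] show "(E', subst0 s0 v0, subst0 s1 v1) \<in> snd (Yrel X)"
    proof (elim conjE disjE exE)
      assume "(Lam s0, Lam s1) \<in> E3"
      from rb_lam[OF rb e3(1) this h(2,3) tv] have "(E3, subst0 s0 v0, subst0 s1 v1) \<in> snd X" .
      then have "W X E3 (subst0 s0 v0) (subst0 s1 v1)" unfolding W_def
        using cl by (metis ctxrel.intros(1) evctx.simps(1) plug.simps(1))
      then show ?thesis unfolding Ysnd using cl e3(2) by blast
    next
      fix x assume "Lam s1 = Lam x" "tilde0 E3 s0 x"
      then have "tilde0 E3 (subst0 s0 v0) (subst0 s1 v1)"
        using tilde0_subst0[OF relaxed_envclosed[OF re], of s0 s1 v0 v1] tv by (auto simp: tilde_def)
      then have "W X E3 (subst0 s0 v0) (subst0 s1 v1)" unfolding W_def using cl e3(1) by blast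
      then show ?thesis unfolding Ysnd using cl e3(2) by blast
    qed
  qed
qed

theorem lemma12:
  assumes "closed t0" and "closed t1"
    and "({}, t0, t1) \<in> snd rbisim"
  shows "({}, t0, t1) \<in> snd pbisim"
proof -
  from assms(3) obtain X where rb: "relaxed_bisim X" and m: "({}, t0, t1) \<in> snd X"
    unfolding rbisim_def by auto
  have "W X {} t0 t1" unfolding W_def
    using assms(1,2) m by (metis ctxrel.intros(1) evctx.simps(1) plug.simps(1))
  then have "({}, t0, t1) \<in> snd (Yrel X)" unfolding Ysnd using assms(1,2)
    by (auto simp: Eok_def)
  moreover have "snd (Yrel X) \<in> {snd X |X. prog_bisim X}" using Y_main[OF rb] by blast
  with \<open>({}, t0, t1) \<in> snd (Yrel X)\<close> show ?thesis unfolding pbisim_def by (simp only: snd_conv) blast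
qed


end
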